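(* Let $i,j\in\{1,\dots,N\}$ and let $m\ge 0$ be an integer. If $m<\delta_{ji}$ (with $\delta_{ji}=\infty$ if there is no directed path from $j$ to $i$), then $\big((-L)^m\big)_{ij}=0$. If $m=\delta_{ji}<\infty$, then $\big((-L)^m\big)_{ij}$ equals the sum of the weights of all shortest directed paths from $j$ to $i$, and this number equals $\vartheta(\mathcal F_m^{j\to i})$.
   Context: Let $\mathcal G$ be a weighted directed graph on the vertex set $\{1,\dots,N\}$ with adjacency matrix $A=[a_{ij}]$, where $a_{ij}>0$ if there is an arc from vertex $j$ to vertex $i$ and $a_{ij}=0$ otherwise; there are no self-loops, so $a_{ii}=0$. The weight of the arc from $j$ to $i$ is $a_{ij}$. The Laplacian is $L=D-A$, where $D=\mathrm{diag}\big(\sum_{j}a_{1j},\dots,\sum_j a_{Nj}\big)$. A directed path from $u$ to $w$ is a sequence of pairwise distinct vertices $u=v_0,v_1,\dots,v_\ell=w$ such that there is an arc from $v_k$ to $v_{k+1}$ for each $k$. Its length is $\ell$, and its weight is the product of the weights of its arcs (the empty product is $1$). The distance $\delta_{uw}$ is the length of a shortest directed path from $u$ to $w$. A diverging (out-)tree is a set of arcs on a vertex subset that has a root vertex of in-degree $0$, has every other vertex of in-degree exactly $1$, and has a directed path from the root to every vertex of the subset. A spanning diverging forest is a set of arcs of $\mathcal G$ such that the vertex set $\{1,\dots,N\}$ is partitioned into vertex-disjoint diverging trees formed by these arcs; isolated vertices are trivial trees. The weight of a forest is the product of the weights of its arcs. For vertices $u,w$ and an integer $k\ge0$, $\mathcal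 F_k^{u\to w}$ denotes the set of all spanning diverging forests with exactly $k$ arcs in which $u$ is the root of a tree that contains $w$. The quantity $\vartheta(\mathcal F_k^{u\to w})$ is the sum of the weights of the forests in $\mathcal F_k^{u\to w}$. *)

theory Defs
  imports Main "HOL-Library.Extended_Nat"
begin

(* Vertices are 1..N. Weight function a :: nat => nat => real, a i j = weight of arc j -> i.
   Arcs are represented as pairs (source, target), i.e. (j, i) is the arc from j to i. *)

definition arc :: "nat \<Rightarrow> (nat \<Rightarrow> nat \<Rightarrow> real) \<Rightarrow> nat \<Rightarrow> nat \<Rightarrow> bool" where
  "arc N a j i \<longleftrightarrow> j \<in> {1..N} \<and> i \<in> {1..N} \<and> a i j > 0"

definition mat_mult :: "nat \<Rightarrow> (nat \<Rightarrow> nat \<Rightarrow> real) \<Rightarrow> (nat \<Rightarrow> nat \<Rightarrow> real) \<Rightarrow> nat \<Rightarrow> nat \<Rightarrow> real" where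
  "mat_mult N A B i j = (\<Sum>k\<in>{1..N}. A i k * B k j)"

fun mat_pow :: "nat \<Rightarrow> (nat \<Rightarrow> nat \<Rightarrow> real) \<Rightarrow> nat \<Rightarrow> nat \<Rightarrow> nat \<Rightarrow> real" where
  "mat_pow N A 0 = (\<lambda>i j. if i = j then 1 else 0)"
| "mat_pow N A (Suc m) = mat_mult N (mat_pow N A m) A"

definition laplacian :: "nat \<Rightarrow> (nat \<Rightarrow> nat \<Rightarrow> real) \<Rightarrow> nat \<Rightarrow> nat \<Rightarrow> real" where
  "laplacian N a i j = (if i = j then (\<Sum>k\<in>{1..N}. a i k) else 0) - a i j"

definition dpath :: "nat \<Rightarrow> (nat \<Rightarrow> nat \<Rightarrow> real) \<Rightarrow> nat \<Rightarrow> nat \<Rightarrow> nat list \<Rightarrow> bool" where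
  "dpath N a u w p \<longleftrightarrow> p \<noteq> [] \<and> hd p = u \<and> last p = w \<and> distinct p \<and> set p \<subseteq> {1..N}
     \<and> (\<forall>k < length p - 1. arc N a (p ! k) (p ! Suc k))"

definition path_len :: "nat list \<Rightarrow> nat" where
  "path_len p = length p - 1"

definition path_weight :: "(nat \<Rightarrow> nat \<Rightarrow> real) \<Rightarrow> nat list \<Rightarrow> real" where
  "path_weight a p = (\<Prod>k<length p - 1. a (p ! Suc k) (p ! k))"

definition dist_g :: "nat \<Rightarrow> (nat \<Rightarrow> nat \<Rightarrow> real) \<Rightarrow> nat \<Rightarrow> nat \<Rightarrow> enat" where
  "dist_g N a u w = (INF p \<in> {p. dpath N a u w p}. enat (path_len p))"

definition shortest_paths :: "nat \<Rightarrow> (nat \<Rightarrow> nat \<Rightarrow> real) \<Rightarrow> nat \<Rightarrow> nat \<Rightarrow> nat list set" where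
  "shortest_paths N a u w = {p. dpath N a u w p \<and> enat (path_len p) = dist_g N a u w}"

definition diverging_tree :: "(nat \<times> nat) set \<Rightarrow> nat set \<Rightarrow> nat \<Rightarrow> bool" where
  "diverging_tree T B r \<longleftrightarrow> r \<in> B \<and> T \<subseteq> B \<times> B
     \<and> (\<forall>x. (x, r) \<notin> T)
     \<and> (\<forall>v \<in> B - {r}. \<exists>!x. (x, v) \<in> T)
     \<and> (\<forall>v \<in> B. (r, v) \<in> T\<^sup>*)"

(* F is a spanning diverging forest of G, decomposed by the partition P of {1..N}
   into the vertex sets of its trees, rt B being the root of the tree on block B *)
definition forest_decomp :: "nat \<Rightarrow> (nat \<Rightarrow> nat \<Rightarrow> real) \<Rightarrow> (nat \<times> nat) set \<Rightarrow> nat set set \<Rightarrow> (nat set \<Rightarrow> nat) \<Rightarrow> bool" where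
  "forest_decomp N a F P rt \<longleftrightarrow>
     (\<forall>(j, i) \<in> F. arc N a j i)
     \<and> \<Union>P = {1..N} \<and> {} \<notin> P
     \<and> (\<forall>B \<in> P. \<forall>B' \<in> P. B \<noteq> B' \<longrightarrow> B \<inter> B' = {})
     \<and> (\<forall>e \<in> F. \<exists>B \<in> P. e \<in> B \<times> B)
     \<and> (\<forall>B \<in> P. diverging_tree (F \<inter> (B \<times> B)) B (rt B))"

definition spanning_forest :: "nat \<Rightarrow> (nat \<Rightarrow> nat \<Rightarrow> real) \<Rightarrow> (nat \<times> nat) set \<Rightarrow> bool" where
  "spanning_forest N a F \<longleftrightarrow> (\<exists>P rt. forest_decomp N a F P rt)"

definition forests_k :: "nat \<Rightarrow> (nat \<Rightarrow> nat \<Rightarrow> real) \<Rightarrow> nat \<Rightarrow> nat \<Rightarrow> nat \<Rightarrow> (nat \<times> nat) set set" where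
  "forests_k N a k u w = {F. card F = k \<and>
      (\<exists>P rt. forest_decomp N a F P rt \<and> (\<exists>B \<in> P. w \<in> B \<and> rt B = u))}"

definition forest_weight :: "(nat \<Rightarrow> nat \<Rightarrow> real) \<Rightarrow> (nat \<times> nat) set \<Rightarrow> real" where
  "forest_weight a F = (\<Prod>(j, i) \<in> F. a i j)"

definition theta :: "(nat \<Rightarrow> nat \<Rightarrow> real) \<Rightarrow> (nat \<times> nat) set set \<Rightarrow> real" where
  "theta a S = (\<Sum>F \<in> S. forest_weight a F)"

end

theory Submission imports Defs begin

fun parcs :: "nat list \<Rightarrow> (nat \<times> nat) set" where
  "parcs (x # y # r) = insert (x, y) (parcs (y # r))"
| "parcs _ = {}"

lemma dpath_single: "dpath N a u w [x] \<longleftrightarrow> x = u \<and> x = w \<and> x \<in> {1..N}"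
  unfolding dpath_def by auto

lemma dpath_Cons2: "dpath N a u w (x # y # r) \<longleftrightarrow>
   x = u \<and> arc N a x y \<and> x \<notin> set (y # r) \<and> x \<in> {1..N} \<and> dpath N a y w (y # r)"
  unfolding dpath_def by (auto simp: All_less_Suc2)

lemma dpath_basic: "dpath N a u w p \<Longrightarrow> p \<noteq> [] \<and> distinct p \<and> hd p = u \<and> last p = w \<and> set p \<subseteq> {1..N}"
  unfolding dpath_def by auto

lemma parcs_mem: "(z, v) \<in> parcs p \<Longrightarrow> z \<in> set p \<and> v \<in> set (tl p)"
  by (induction p rule: parcs.induct) auto

lemma parcs_sub: "parcs p \<subseteq> set p \<times> set p"
  by (induction p rule: parcs.induct) auto

lemma parcs_finite: "finite (parcs p)"
  by (induction p rule: parcs.induct) auto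

lemma parcs_arc: "dpath N a u w p \<Longrightarrow> (x,y) \<in> parcs p \<Longrightarrow> arc N a x y"
  by (induction p arbitrary: u rule: parcs.induct) (auto simp: dpath_Cons2)

lemma parcs_card: "distinct p \<Longrightarrow> card (parcs p) = length p - 1"
proof (induction p rule: parcs.induct)
  case (1 x y r)
  have "(x, y) \<notin> parcs (y # r)" using parcs_mem 1(2) by fastforce
  then show ?case using 1 parcs_finite by simp
qed auto

lemma path_weight_Cons2: "path_weight a (x # y # r) = a y x * path_weight a (y # r)"
  unfolding path_weight_def by (simp only: length_Cons diff_Suc_1 prod.lessThan_Suc_shift) simp

lemma forest_weight_parcs: "distinct p \<Longrightarrow> forest_weight a (parcs p) = path_weight a p"
proof (induction p rule: parcs.induct)
  case (1 x y r)
  have "(x, y) \<notin> parcs (y # r)" using parcs_mem 1(2) by fastforce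
  then show ?case using 1 parcs_finite by (simp add: forest_weight_def path_weight_Cons2)
qed (auto simp: forest_weight_def path_weight_def)

lemma suffix: "dpath N a k i q \<Longrightarrow> j \<in> set q \<Longrightarrow>
   \<exists>q'. dpath N a j i q' \<and> length q' \<le> length q \<and> parcs q' \<subseteq> parcs q"
proof (induction q arbitrary: k rule: parcs.induct)
  case (1 x y r)
  show ?case
  proof (cases "j = x")
    case True then show ?thesis using 1(2) by (intro exI[of _ "x # y # r"]) (auto simp: dpath_Cons2)
  next
    case False
    then have "j \<in> set (y # r)" using 1 by simp
    then obtain q' where "dpath N a j i q'" "length q' \<le> length (y # r)" "parcs q' \<subseteq> parcs (y # r)"
      using 1 by (auto simp: dpath_Cons2)
    then show ?thesis by (intro exI[of _ q']) auto
  qed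
next
  case ("2_1") then show ?case by (simp add: dpath_def)
next
  case ("2_2" v) then show ?case by (intro exI[of _ "[v]"]) (simp add: dpath_single)
qed

lemma dist_le: "dpath N a u w p \<Longrightarrow> dist_g N a u w \<le> enat (path_len p)"
  unfolding dist_g_def by (auto intro: INF_lower)

lemma dist_ex: assumes "dist_g N a u w = enat n" shows "\<exists>p. dpath N a u w p \<and> path_len p = n"
proof -
  let ?S = "{p. dpath N a u w p}"
  have ne: "?S \<noteq> {}"
  proof
    assume "?S = {}" then have "dist_g N a u w = \<infinity>" unfolding dist_g_def by (simp add: top_enat_def[symmetric])
    with assms show False by simp
  qed
  have "dist_g N a u w \<in> (\<lambda>p. enat (path_len p)) ` ?S"
    unfolding dist_g_def Inf_enat_def using ne by (auto intro: LeastI)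
  with assms show ?thesis by auto
qed

lemma dist_self: "j \<in> {1..N} \<Longrightarrow> dist_g N a j j = 0"
  using dist_le[of N a j j "[j]"] by (simp add: dpath_single path_len_def enat_0)

lemma dist_zero: "dist_g N a j i = 0 \<Longrightarrow> i = j"
proof -
  assume "dist_g N a j i = 0"
  then obtain p where p: "dpath N a j i p" "path_len p = 0" using dist_ex[of N a j i 0] by (auto simp: zero_enat_def)
  then obtain x where "p = [x]" unfolding path_len_def dpath_def by (cases p) auto
  then show ?thesis using p by (simp add: dpath_single)
qed

lemma dist_step: assumes "arc N a j k" shows "dist_g N a j i \<le> eSuc (dist_g N a k i)"
proof (cases "dist_g N a k i")
  case (enat n)
  then obtain q where q: "dpath N a k i q" "path_len q = n" using dist_ex by blast
  show ?thesis
  proof (cases "j \<in> set q")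
    case True
    then obtain q' where "dpath N a j i q'" "length q' \<le> length q" using suffix[OF q(1)] by blast
    then have "enat (path_len q') \<le> enat n" using q(2) unfolding path_len_def by simp
    then have "dist_g N a j i \<le> enat n" using dist_le[of N a j i q'] \<open>dpath N a j i q'\<close> by (rule_tac order_trans) 
    then show ?thesis using enat by (simp add: eSuc_enat) (erule order_trans, simp)
  next
    case False
    obtain r where r: "q = k # r" using dpath_basic[OF q(1)] by (cases q) auto
    have "dpath N a j i (j # q)" using q(1) False assms r
      by (cases r) (auto simp: dpath_Cons2 dpath_single arc_def)
    then have "dist_g N a j i \<le> enat (Suc n)" using dist_le q(2) by (fastforce simp: path_len_def r)
    then show ?thesis using enat by (simp add: eSuc_enat)
  qed
qed simp

lemma finite_SP: "finite (shortest_paths N a u w)"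
proof -
  have "shortest_paths N a u w \<subseteq> {xs. set xs \<subseteq> {1..N} \<and> length xs \<le> N}"
  proof
    fix p assume "p \<in> shortest_paths N a u w"
    then have d: "distinct p" "set p \<subseteq> {1..N}" unfolding shortest_paths_def dpath_def by auto
    then have "length p \<le> N" using distinct_card[OF d(1)] card_mono[OF _ d(2)] by simp
    then show "p \<in> {xs. set xs \<subseteq> {1..N} \<and> length xs \<le> N}" using d by simp
  qed
  then show ?thesis using finite_subset finite_lists_length_le[of "{1..N}" N] by blast
qed

lemma distinct_hd_last: assumes "p \<noteq> []" "distinct p" "hd p = last p" shows "p = [hd p]"
proof (cases p)
  case (Cons x r)
  show ?thesis
  proof (cases "r = []")
    case False
    then have "last p \<in> set r" using Cons by simp
    then show ?thesis using assms Cons by simp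
  qed (use Cons in simp)
qed (use assms in simp)

lemma SP_self: "j \<in> {1..N} \<Longrightarrow> shortest_paths N a j j = {[j]}"
proof -
  assume j: "j \<in> {1..N}"
  have iff: "dpath N a j j p \<longleftrightarrow> p = [j]" for p
  proof
    assume "dpath N a j j p"
    then have "p \<noteq> []" "distinct p" "hd p = j" "last p = j" using dpath_basic by blast+
    then show "p = [j]" using distinct_hd_last[of p] by simp
  next
    assume "p = [j]" then show "dpath N a j j p" using j by (simp only: dpath_single)
  qed
  have d0: "dist_g N a j j = enat (path_len [j])" using dist_self[OF j, of a] by (simp add: path_len_def enat_0)
  show ?thesis
  proof (intro equalityI subsetI)
    fix p assume "p \<in> shortest_paths N a j j"
    then have "dpath N a j j p" unfolding shortest_paths_def by simp
    then show "p \<in> {[j]}" using iff by simp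
  next
    fix p assume "p \<in> {[j]}"
    then have p: "p = [j]" by simp
    have "dpath N a j j [j]" using iff by simp
    then show "p \<in> shortest_paths N a j j" unfolding shortest_paths_def p using d0 by simp
  qed
qed

lemma enat_Suc_le: "enat (Suc m) \<le> eSuc d \<Longrightarrow> enat m \<le> d"
  by (simp flip: eSuc_enat)

lemma enat_Suc_less: "enat (Suc m) < eSuc d \<Longrightarrow> enat m < d"
  by (simp flip: eSuc_enat)

lemma SP_Suc:
  assumes d: "dist_g N a j i = enat (Suc m)" and j: "j \<in> {1..N}"
  shows "shortest_paths N a j i = (\<Union>k\<in>{k\<in>{1..N}. arc N a j k \<and> dist_g N a k i = enat m}.
           Cons j ` shortest_paths N a k i)"
proof (intro equalityI subsetI)
  fix q assume "q \<in> shortest_paths N a j i"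
  then have q: "dpath N a j i q" "path_len q = Suc m" using d by (auto simp: shortest_paths_def)
  obtain x y r where qq: "q = x # y # r"
    using q(2) unfolding path_len_def by (cases q rule: parcs.cases) auto
  have x: "x = j" "arc N a j y" "dpath N a y i (y # r)" using q(1) qq by (auto simp: dpath_Cons2)
  have l: "path_len (y # r) = m" using q(2) qq by (simp add: path_len_def)
  have "dist_g N a y i \<le> enat m" using dist_le[OF x(3)] l by simp
  moreover have "enat m \<le> dist_g N a y i" using dist_step[OF x(2), of i] unfolding d by (rule enat_Suc_le)
  ultimately have dy: "dist_g N a y i = enat m" by simp
  have y: "y \<in> {1..N}" using x(2) by (simp add: arc_def)
  have "y # r \<in> shortest_paths N a y i" using x(3) l dy by (simp add: shortest_paths_def)
  moreover have "y \<in> {k\<in>{1..N}. arc N a j k \<and> dist_g N a k i = enat m}" using y x(2) dy by simp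
  ultimately show "q \<in> (\<Union>k\<in>{k\<in>{1..N}. arc N a j k \<and> dist_g N a k i = enat m}. Cons j ` shortest_paths N a k i)"
    using qq x(1) by (intro UN_I[of y]) auto
next
  fix q assume "q \<in> (\<Union>k\<in>{k\<in>{1..N}. arc N a j k \<and> dist_g N a k i = enat m}. Cons j ` shortest_paths N a k i)"
  then obtain k p where k: "arc N a j k" "dist_g N a k i = enat m" and p: "p \<in> shortest_paths N a k i"
    and qq: "q = j # p" by auto
  have pd: "dpath N a k i p" "path_len p = m" using p k by (auto simp: shortest_paths_def)
  have nj: "j \<notin> set p"
  proof
    assume "j \<in> set p"
    then obtain q' where "dpath N a j i q'" "length q' \<le> length p" using suffix[OF pd(1)] by blast
    then have "path_len q' \<le> m" using pd(2) unfolding path_len_def by simp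
    then have "dist_g N a j i \<le> enat m" using order_trans[OF dist_le[OF \<open>dpath N a j i q'\<close>]] by simp
    then show False using d by simp
  qed
  obtain r where r: "p = k # r" using dpath_basic[OF pd(1)] by (cases p) auto
  have "dpath N a j i q" using pd(1) nj k(1) j r qq by (simp add: dpath_Cons2)
  moreover have "path_len q = Suc m" using pd(2) qq r by (simp add: path_len_def)
  ultimately show "q \<in> shortest_paths N a j i" using d by (simp add: shortest_paths_def)
qed

definition negL :: "nat \<Rightarrow> (nat \<Rightarrow> nat \<Rightarrow> real) \<Rightarrow> nat \<Rightarrow> nat \<Rightarrow> real" where
  "negL N a = (\<lambda>p q. - laplacian N a p q)"

lemma main:
  assumes nonneg: "\<And>p q. p \<in> {1..N} \<Longrightarrow> q \<in> {1..N} \<Longrightarrow> a p q \<ge> 0"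
    and noloop: "\<And>p. p \<in> {1..N} \<Longrightarrow> a p p = 0"
  shows "\<forall>i\<in>{1..N}. \<forall>j\<in>{1..N}.
     (enat m < dist_g N a j i \<longrightarrow> mat_pow N (negL N a) m i j = 0)
   \<and> (enat m = dist_g N a j i \<longrightarrow> mat_pow N (negL N a) m i j = (\<Sum>p \<in> shortest_paths N a j i. path_weight a p))"
proof (induction m)
  case 0
  show ?case
  proof (intro ballI conjI impI)
    fix i j assume i: "i \<in> {1..N}" and j: "j \<in> {1..N}"
    { assume "enat 0 < dist_g N a j i"
      then have "i \<noteq> j" using dist_self[OF j, of a] by (auto simp: enat_0)
      then show "mat_pow N (negL N a) 0 i j = 0" by simp }
    { assume "enat 0 = dist_g N a j i"
      then have "i = j" using dist_zero by (simp add: enat_0)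
      then show "mat_pow N (negL N a) 0 i j = (\<Sum>p \<in> shortest_paths N a j i. path_weight a p)"
        using SP_self[OF j] by (simp add: path_weight_def) }
  qed
next
  case (Suc m)
  have IH: "\<And>i j. i\<in>{1..N} \<Longrightarrow> j \<in> {1..N} \<Longrightarrow> enat m < dist_g N a j i \<Longrightarrow> mat_pow N (negL N a) m i j = 0"
   and IH2: "\<And>i j. i\<in>{1..N} \<Longrightarrow> j \<in> {1..N} \<Longrightarrow> enat m = dist_g N a j i \<Longrightarrow>
        mat_pow N (negL N a) m i j = (\<Sum>p \<in> shortest_paths N a j i. path_weight a p)"
    using Suc.IH by auto
  have Mo: "\<And>k j. k \<noteq> j \<Longrightarrow> negL N a k j = a k j" by (simp add: negL_def laplacian_def)
  have Z: "\<And>k j. k\<in>{1..N} \<Longrightarrow> j \<in> {1..N} \<Longrightarrow> \<not> arc N a j k \<Longrightarrow> a k j = 0"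
    using nonneg unfolding arc_def by (meson linorder_neqE_linordered_idom not_le)
  have Mpow: "\<And>i j. mat_pow N (negL N a) (Suc m) i j = (\<Sum>k\<in>{1..N}. mat_pow N (negL N a) m i k * negL N a k j)"
    by (simp add: mat_mult_def)
  show ?case
  proof (intro ballI conjI impI)
    fix i j assume i: "i \<in> {1..N}" and j: "j \<in> {1..N}"
    { assume lt: "enat (Suc m) < dist_g N a j i"
      have "\<forall>k\<in>{1..N}. mat_pow N (negL N a) m i k * negL N a k j = 0"
      proof
        fix k assume k: "k \<in> {1..N}"
        show "mat_pow N (negL N a) m i k * negL N a k j = 0"
        proof (cases "k = j")
          case True
          have "enat m < dist_g N a j i" using lt by (rule_tac order.strict_trans[rotated]) auto
          then show ?thesis using IH[OF i j] True by simp
        next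
          case False
          show ?thesis
          proof (cases "arc N a j k")
            case True
            have "enat (Suc m) < eSuc (dist_g N a k i)" using lt dist_step[OF True, of i] by (rule less_le_trans)
            then have "enat m < dist_g N a k i" by (rule enat_Suc_less)
            then show ?thesis using IH[OF i k] by simp
          next
            case nar: False
            show ?thesis using Z[OF k j nar] Mo[OF False] by simp
          qed
        qed
      qed
      then show "mat_pow N (negL N a) (Suc m) i j = 0" unfolding Mpow by (rule sum.neutral) }
    { assume eq: "enat (Suc m) = dist_g N a j i"
      define K where "K = {k\<in>{1..N}. arc N a j k \<and> dist_g N a k i = enat m}"
      have "mat_pow N (negL N a) (Suc m) i j = (\<Sum>k\<in>K. a k j * (\<Sum>p \<in> shortest_paths N a k i. path_weight a p))"
        unfolding Mpow
      proof (rule sum.mono_neutral_cong_right)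
        show "K \<subseteq> {1..N}" by (auto simp: K_def)
        show "\<forall>k\<in>{1..N} - K. mat_pow N (negL N a) m i k * negL N a k j = 0"
        proof
          fix k assume k: "k \<in> {1..N} - K"
          show "mat_pow N (negL N a) m i k * negL N a k j = 0"
          proof (cases "k = j")
            case True
            have "enat m < dist_g N a j i" using eq[symmetric] by simp
            then show ?thesis using IH[OF i j] True by simp
          next
            case False
            show ?thesis
            proof (cases "arc N a j k")
              case True
              have "enat m \<le> dist_g N a k i" using dist_step[OF True, of i] unfolding eq[symmetric] by (rule enat_Suc_le)
              moreover have "dist_g N a k i \<noteq> enat m" using k True by (auto simp: K_def)
              ultimately have "enat m < dist_g N a k i" by simp
              then show ?thesis using IH[OF i] k by simp
            next
              case nar: False
              show ?thesis using Z[OF _ j nar] k Mo[OF False] by simp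
            qed
          qed
        qed
        fix k assume k: "k \<in> K"
        then have "k \<noteq> j" using noloop[OF j] by (auto simp: K_def arc_def)
        then show "mat_pow N (negL N a) m i k * negL N a k j = a k j * (\<Sum>p \<in> shortest_paths N a k i. path_weight a p)"
          using IH2[OF i, of k] k Mo by (simp add: K_def)
      qed simp
      also have "\<dots> = (\<Sum>k\<in>K. \<Sum>q \<in> Cons j ` shortest_paths N a k i. path_weight a q)"
      proof (rule sum.cong[OF refl])
        fix k assume k: "k \<in> K"
        have "(\<Sum>q \<in> Cons j ` shortest_paths N a k i. path_weight a q)
            = (\<Sum>p \<in> shortest_paths N a k i. path_weight a (j # p))"
          by (simp add: sum.reindex)
        also have "\<dots> = (\<Sum>p \<in> shortest_paths N a k i. a k j * path_weight a p)"
        proof (rule sum.cong[OF refl])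
          fix p assume "p \<in> shortest_paths N a k i"
          then have "dpath N a k i p" by (simp add: shortest_paths_def)
          then obtain r where "p = k # r" using dpath_basic by (cases p) fastforce+
          then show "path_weight a (j # p) = a k j * path_weight a p" by (simp add: path_weight_Cons2)
        qed
        finally show "a k j * (\<Sum>p \<in> shortest_paths N a k i. path_weight a p)
           = (\<Sum>q \<in> Cons j ` shortest_paths N a k i. path_weight a q)" by (simp add: sum_distrib_left)
      qed
      also have "\<dots> = (\<Sum>q \<in> (\<Union>k\<in>K. Cons j ` shortest_paths N a k i). path_weight a q)"
      proof (rule sum.UNION_disjoint[symmetric])
        show "finite K" unfolding K_def by (rule finite_subset[of _ "{1..N}"]) auto
        show "\<forall>k\<in>K. finite (Cons j ` shortest_paths N a k i)" by (simp add: finite_SP)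
        show "\<forall>k\<in>K. \<forall>k'\<in>K. k \<noteq> k' \<longrightarrow> Cons j ` shortest_paths N a k i \<inter> Cons j ` shortest_paths N a k' i = {}"
        proof (intro ballI impI)
          fix k k' :: nat assume kk: "k \<noteq> k'"
          { fix q assume "q \<in> Cons j ` shortest_paths N a k i" "q \<in> Cons j ` shortest_paths N a k' i"
            then obtain p p' where pp: "q = j # p" "p \<in> shortest_paths N a k i" "q = j # p'" "p' \<in> shortest_paths N a k' i"
              by auto
            then have "hd p = k" "hd p' = k'" by (auto simp: shortest_paths_def dest: dpath_basic)
            moreover have "p = p'" using pp by simp
            ultimately have False using kk by simp }
          then show "Cons j ` shortest_paths N a k i \<inter> Cons j ` shortest_paths N a k' i = {}" by blast
        qed
      qed
      also have "\<dots> = (\<Sum>p \<in> shortest_paths N a j i. path_weight a p)"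
        using SP_Suc[OF eq[symmetric] j] by (simp add: K_def)
      finally show "mat_pow N (negL N a) (Suc m) i j = (\<Sum>p \<in> shortest_paths N a j i. path_weight a p)" . }
  qed
qed

lemma tree_path: "distinct p \<Longrightarrow> p \<noteq> [] \<Longrightarrow> diverging_tree (parcs p) (set p) (hd p)"
proof (induction p rule: parcs.induct)
  case (1 x y r)
  let ?T = "parcs (y # r)" and ?B = "set (y # r)"
  have IH: "diverging_tree ?T ?B y" using 1 by simp
  have xB: "x \<notin> ?B" using 1(2) by simp
  have TB: "?T \<subseteq> ?B \<times> ?B" using parcs_sub by blast
  have noy: "\<forall>z. (z, y) \<notin> ?T" using IH unfolding diverging_tree_def by blast
  have uq: "\<forall>v \<in> ?B - {y}. \<exists>!z. (z, v) \<in> ?T" using IH unfolding diverging_tree_def by blast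
  have rc: "\<forall>v \<in> ?B. (y, v) \<in> ?T\<^sup>*" using IH unfolding diverging_tree_def by blast
  have "parcs (x # y # r) = insert (x, y) ?T" by simp
  moreover have "set (x # y # r) = insert x ?B" by simp
  moreover have "diverging_tree (insert (x, y) ?T) (insert x ?B) x"
    unfolding diverging_tree_def
  proof (intro conjI)
    show "x \<in> insert x ?B" by simp
    show "insert (x, y) ?T \<subseteq> insert x ?B \<times> insert x ?B" using TB by auto
    show "\<forall>z. (z, x) \<notin> insert (x, y) ?T" using TB xB by auto
    show "\<forall>v \<in> insert x ?B - {x}. \<exists>!z. (z, v) \<in> insert (x, y) ?T"
    proof
      fix v assume v: "v \<in> insert x ?B - {x}"
      show "\<exists>!z. (z, v) \<in> insert (x, y) ?T"
      proof (cases "v = y")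
        case True
        then show ?thesis using noy by auto
      next
        case False
        then have "\<exists>!z. (z, v) \<in> ?T" using uq v by auto
        then show ?thesis using False by auto
      qed
    qed
    show "\<forall>v \<in> insert x ?B. (x, v) \<in> (insert (x, y) ?T)\<^sup>*"
    proof
      fix v assume v: "v \<in> insert x ?B"
      show "(x, v) \<in> (insert (x, y) ?T)\<^sup>*"
      proof (cases "v = x")
        case False
        then have "(y, v) \<in> ?T\<^sup>*" using v rc by auto
        then have "(y, v) \<in> (insert (x, y) ?T)\<^sup>*" by (rule rtrancl_mono[THEN subsetD, rotated]) auto
        then show ?thesis by (rule converse_rtrancl_into_rtrancl[rotated]) simp
      qed simp
    qed
  qed
  ultimately show ?case by simp
next
  case ("2_2" v)
  then show ?case by (simp add: diverging_tree_def)
qed simp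

lemma rtrancl_path:
  assumes "(u, w) \<in> T\<^sup>*" "\<forall>(x,y)\<in>T. arc N a x y" "w \<in> {1..N}"
  shows "\<exists>p. dpath N a u w p \<and> parcs p \<subseteq> T"
  using assms(1)
proof (induction rule: converse_rtrancl_induct)
  case base
  then show ?case using assms(3) by (intro exI[of _ "[w]"]) (simp add: dpath_single)
next
  case (step y z)
  then obtain q where q: "dpath N a z w q" "parcs q \<subseteq> T" by blast
  have yz: "arc N a y z" using assms(2) step(1) by blast
  show ?case
  proof (cases "y \<in> set q")
    case True
    then obtain q' where "dpath N a y w q'" "parcs q' \<subseteq> parcs q" using suffix[OF q(1)] by blast
    then show ?thesis using q(2) by blast
  next
    case False
    obtain r where r: "q = z # r" using dpath_basic[OF q(1)] by (cases q) auto
    have y1: "y \<in> {1..N}" using yz by (simp add: arc_def)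
    have "dpath N a y w (y # q)" using q(1) False yz r y1 by (simp add: dpath_Cons2)
    moreover have "parcs (y # q) \<subseteq> T" using r q(2) step(1) by simp
    ultimately show ?thesis by blast
  qed
qed

lemma parcs_hd2:
  assumes h: "(x,y) \<in> parcs q" "hd q = x" "distinct q"
  shows "\<exists>r. q = x # y # r"
proof (cases q rule: parcs.cases)
  case (1 x' z r)
  then have x': "x' = x" using h(2) by simp
  have "(x,y) \<notin> parcs (z # r)" using parcs_mem[of x y "z # r"] h(3) 1 x' by auto
  then have "z = y" using h(1) 1 by simp
  then show ?thesis using 1 x' by simp
qed (use h in auto)

lemma parcs_inj: "distinct p \<Longrightarrow> distinct q \<Longrightarrow> p \<noteq> [] \<Longrightarrow> q \<noteq> [] \<Longrightarrow> hd p = hd q \<Longrightarrow> parcs p = parcs q \<Longrightarrow> p = q"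
proof (induction p arbitrary: q rule: parcs.induct)
  case (1 x y r)
  have "(x,y) \<in> parcs q" using 1(7) by (metis insertI1 parcs.simps(1))
  then obtain r' where q: "q = x # y # r'" using parcs_hd2[of x y q] 1(3,6) by auto
  have a1: "(x,y) \<notin> parcs (y#r)" using parcs_mem[of x y "y # r"] 1(2) by auto
  have a2: "(x,y) \<notin> parcs (y#r')" using parcs_mem[of x y "y # r'"] 1(3) q by auto
  have "parcs (y#r) = parcs (y#r')" using 1(7) q a1 a2 by (simp add: insert_ident)
  moreover have "distinct (y # r)" "distinct (y # r')" using 1(2,3) q by auto
  ultimately have "y # r = y # r'" using 1(1)[of "y # r'"] by simp
  then show ?case using q by simp
next
  case ("2_2" v)
  then show ?case by (cases q rule: parcs.cases) auto
qed simp

lemma forests_eq: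
  assumes d: "dist_g N a j i = enat m" and j: "j \<in> {1..N}" and i: "i \<in> {1..N}"
  shows "forests_k N a m j i = parcs ` shortest_paths N a j i"
proof (intro equalityI subsetI)
  fix F assume "F \<in> forests_k N a m j i"
  then obtain P rt B where F: "card F = m" "forest_decomp N a F P rt" "B \<in> P" "i \<in> B" "rt B = j"
    unfolding forests_k_def by blast
  have arcs: "\<forall>(x,y)\<in>F. arc N a x y" using F(2) unfolding forest_decomp_def by blast
  have tr: "diverging_tree (F \<inter> B \<times> B) B j" using F(2,3,5) unfolding forest_decomp_def by blast
  then have rj: "(j, i) \<in> (F \<inter> B \<times> B)\<^sup>*" using F(4) unfolding diverging_tree_def by blast
  have ar2: "\<forall>(x,y)\<in>F \<inter> B \<times> B. arc N a x y" using arcs by blast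
  obtain p where p: "dpath N a j i p" "parcs p \<subseteq> F \<inter> B \<times> B"
    using rtrancl_path[OF rj ar2 i] by blast
  have finF: "finite F"
  proof (rule finite_subset[of _ "{1..N} \<times> {1..N}"])
    show "F \<subseteq> {1..N} \<times> {1..N}" using arcs by (auto simp: arc_def)
  qed simp
  have sub: "parcs p \<subseteq> F" using p(2) by blast
  have cp: "card (parcs p) = path_len p" using dpath_basic[OF p(1)] parcs_card by (simp add: path_len_def)
  have "card (parcs p) \<le> m" using card_mono[OF finF sub] F(1) by simp
  moreover have "enat m \<le> enat (path_len p)" using dist_le[OF p(1)] d by simp
  ultimately have pl: "path_len p = m" using cp by simp
  have "parcs p = F" using card_subset_eq[OF finF sub] cp pl F(1) by simp
  moreover have "p \<in> shortest_paths N a j i" using p(1) pl d by (simp add: shortest_paths_def)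
  ultimately show "F \<in> parcs ` shortest_paths N a j i" by blast
next
  fix F assume "F \<in> parcs ` shortest_paths N a j i"
  then obtain p where F: "F = parcs p" and p: "dpath N a j i p" "enat (path_len p) = dist_g N a j i"
    unfolding shortest_paths_def by blast
  have pb: "p \<noteq> []" "distinct p" "hd p = j" "last p = i" "set p \<subseteq> {1..N}" using dpath_basic[OF p(1)] by auto
  have pl: "path_len p = m" using p(2) d by simp
  define P where "P = insert (set p) ((\<lambda>v. {v}) ` ({1..N} - set p))"
  define rt where "rt = (\<lambda>B::nat set. if B = set p then j else Min B)"
  have "forest_decomp N a F P rt"
    unfolding forest_decomp_def
  proof (intro conjI)
    show "\<forall>(x, y)\<in>F. arc N a x y" using parcs_arc[OF p(1)] F by blast
    show "\<Union>P = {1..N}" using pb(5) by (auto simp: P_def)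
    show "{} \<notin> P" using pb(1) by (auto simp: P_def)
    show "\<forall>B\<in>P. \<forall>B'\<in>P. B \<noteq> B' \<longrightarrow> B \<inter> B' = {}" by (auto simp: P_def)
    show "\<forall>e\<in>F. \<exists>B\<in>P. e \<in> B \<times> B" using parcs_sub F by (auto simp: P_def)
    show "\<forall>B\<in>P. diverging_tree (F \<inter> B \<times> B) B (rt B)"
    proof
      fix B assume "B \<in> P"
      then consider "B = set p" | v where "v \<in> {1..N} - set p" "B = {v}" by (auto simp: P_def)
      then show "diverging_tree (F \<inter> B \<times> B) B (rt B)"
      proof cases
        case 1
        have "F \<inter> B \<times> B = parcs p" using parcs_sub F 1 by auto
        then show ?thesis using tree_path[OF pb(2,1)] pb(3) 1 by (simp add: rt_def)
      next
        case 2
        have "F \<inter> B \<times> B = {}" using parcs_sub F 2 by auto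
        moreover have "rt B = v" using 2 by (auto simp: rt_def)
        ultimately show ?thesis using 2 by (simp add: diverging_tree_def)
      qed
    qed
  qed
  moreover have "set p \<in> P \<and> i \<in> set p \<and> rt (set p) = j" using pb by (auto simp: P_def rt_def)
  moreover have "card F = m" using F parcs_card[OF pb(2)] pl by (simp add: path_len_def)
  ultimately show "F \<in> forests_k N a m j i" unfolding forests_k_def by blast
qed

theorem lemma1:
  fixes N :: nat and a :: "nat \<Rightarrow> nat \<Rightarrow> real" and i j m :: nat
  assumes nonneg: "\<And>p q. p \<in> {1..N} \<Longrightarrow> q \<in> {1..N} \<Longrightarrow> a p q \<ge> 0"
    and noloop: "\<And>p. p \<in> {1..N} \<Longrightarrow> a p p = 0"
    and i: "i \<in> {1..N}" and j: "j \<in> {1..N}"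
  shows "(enat m < dist_g N a j i \<longrightarrow>
            mat_pow N (\<lambda>p q. - laplacian N a p q) m i j = 0)
       \<and> (enat m = dist_g N a j i \<longrightarrow>
            mat_pow N (\<lambda>p q. - laplacian N a p q) m i j
              = (\<Sum>p \<in> shortest_paths N a j i. path_weight a p)
          \<and> mat_pow N (\<lambda>p q. - laplacian N a p q) m i j
              = theta a (forests_k N a m j i))"
proof -
  have M: "(\<lambda>p q. - laplacian N a p q) = negL N a" by (simp add: negL_def)
  have mn: "(enat m < dist_g N a j i \<longrightarrow> mat_pow N (negL N a) m i j = 0)
   \<and> (enat m = dist_g N a j i \<longrightarrow> mat_pow N (negL N a) m i j = (\<Sum>p \<in> shortest_paths N a j i. path_weight a p))"
    using bspec[OF bspec[OF main[where N=N and a=a and m=m, OF nonneg noloop] i] j] .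
  have th: "theta a (forests_k N a m j i) = (\<Sum>p \<in> shortest_paths N a j i. path_weight a p)"
    if eq: "enat m = dist_g N a j i"
  proof -
    have inj: "inj_on parcs (shortest_paths N a j i)"
    proof (rule inj_onI)
      fix p q assume "p \<in> shortest_paths N a j i" "q \<in> shortest_paths N a j i" "parcs p = parcs q"
      then have "dpath N a j i p" "dpath N a j i q" "parcs p = parcs q" by (simp_all add: shortest_paths_def)
      then show "p = q" using parcs_inj[of p q] dpath_basic[of N a j i p] dpath_basic[of N a j i q] by simp
    qed
    have "theta a (forests_k N a m j i) = (\<Sum>F \<in> parcs ` shortest_paths N a j i. forest_weight a F)"
      unfolding theta_def using forests_eq[OF eq[symmetric] j i] by simp
    also have "\<dots> = (\<Sum>p \<in> shortest_paths N a j i. forest_weight a (parcs p))"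
      using inj by (simp add: sum.reindex)
    also have "\<dots> = (\<Sum>p \<in> shortest_paths N a j i. path_weight a p)"
    proof (rule sum.cong[OF refl])
      fix p assume "p \<in> shortest_paths N a j i"
      then have "dpath N a j i p" by (simp add: shortest_paths_def)
      then have "distinct p" using dpath_basic by blast
      then show "forest_weight a (parcs p) = path_weight a p" by (rule forest_weight_parcs)
    qed
    finally show ?thesis .
  qed
  show ?thesis unfolding M
  proof (intro conjI impI)
    show "enat m < dist_g N a j i \<Longrightarrow> mat_pow N (negL N a) m i j = 0" using mn by blast
    assume eq: "enat m = dist_g N a j i"
    then show "mat_pow N (negL N a) m i j = (\<Sum>p \<in> shortest_paths N a j i. path_weight a p)" using mn by blast
    then show "mat_pow N (negL N a) m i j = theta a (forests_k N a m j i)" using th[OF eq] by simp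
  qed
qed

end
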